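(* Let $\mathcal U$ be an unbalanced critical update family and let $K\subset\mathbb Z^2$ with $2\le|K|<\infty$ be such that $[K]$ is strongly connected. Then there is a partition $K=K_1\cup K_2$ into non-empty disjoint sets such that $[K_1]$, $[K_2]$ and $[K_1]\cup[K_2]$ are all strongly connected.
   Context: Update family $\mathcal U$: finite collection of finite subsets of $\mathbb Z^2\setminus\{0\}$; $A_0=A$, $A_{t+1}=A_t\cup\{x:x+X\subset A_t\text{ for some }X\in\mathcal U\}$, $[A]=\bigcup_tA_t$. (Unbalanced critical is as in the paper: $1\le\alpha(\mathcal U)<\infty$ and no closed semicircle of directions all have difficulty at most $\alpha(\mathcal U)$; only the choice of $\kappa$ depends on this.) $\nu=\max\{\|x-y\|:x,y\in X\cup\{0\},X\in\mathcal U\}$ and $\kappa=3\nu$. A set $S\subset\mathbb Z^2$ is strongly connected if it is connected in the graph on $\mathbb Z^2$ in which $x,y$ are adjacent iff $\|x-y\|_2\le\kappa$. *)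

theory Defs
  imports Complex_Main "HOL-Library.Extended_Nat"
begin

type_synonym pt = "int \<times> int"

definition update_family :: "pt set set \<Rightarrow> bool" where
  "update_family U \<longleftrightarrow> finite U \<and> (\<forall>X\<in>U. finite X \<and> (0,0) \<notin> X)"

definition padd :: "pt \<Rightarrow> pt \<Rightarrow> pt" where
  "padd x y = (fst x + fst y, snd x + snd y)"

definition bp_step :: "pt set set \<Rightarrow> pt set \<Rightarrow> pt set" where
  "bp_step U A = A \<union> {x. \<exists>X\<in>U. padd x ` X \<subseteq> A}"

definition bp_closure :: "pt set set \<Rightarrow> pt set \<Rightarrow> pt set" where
  "bp_closure U A = (\<Union>t. (bp_step U ^^ t) A)"

text \<open>Directions u in S^1 are parametrised by angles: u = (cos th, sin th).\<close>
definition ip :: "pt \<Rightarrow> real \<Rightarrow> real" where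
  "ip x th = real_of_int (fst x) * cos th + real_of_int (snd x) * sin th"

definition halfplane :: "real \<Rightarrow> pt set" where
  "halfplane th = {x. ip x th < 0}"

definition stable_dir :: "pt set set \<Rightarrow> real \<Rightarrow> bool" where
  "stable_dir U th \<longleftrightarrow> bp_closure U (halfplane th) = halfplane th"

definition isolated_stable :: "pt set set \<Rightarrow> real \<Rightarrow> bool" where
  "isolated_stable U th \<longleftrightarrow> stable_dir U th \<and>
     (\<exists>e>0. \<forall>th'. 0 < \<bar>th' - th\<bar> \<and> \<bar>th' - th\<bar> < e \<longrightarrow> \<not> stable_dir U th')"

definition difficulty :: "pt set set \<Rightarrow> real \<Rightarrow> enat" where
  "difficulty U th =
     (if \<not> stable_dir U th then 0
      else if isolated_stable U th then
        Inf {enat (card Z) | Z. finite Z \<and>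
              infinite (bp_closure U (halfplane th \<union> Z) - halfplane th)}
      else \<infinity>)"

definition alpha :: "pt set set \<Rightarrow> enat" where
  "alpha U = (INF th. SUP th'\<in>{th<..<th + pi}. difficulty U th')"

definition unbalanced_critical :: "pt set set \<Rightarrow> bool" where
  "unbalanced_critical U \<longleftrightarrow> update_family U \<and> 1 \<le> alpha U \<and> alpha U < \<infinity> \<and>
     \<not> (\<exists>th. \<forall>th'\<in>{th..th + pi}. difficulty U th' \<le> alpha U)"

definition edist :: "pt \<Rightarrow> pt \<Rightarrow> real" where
  "edist x y = sqrt (real_of_int ((fst x - fst y)^2 + (snd x - snd y)^2))"

definition nu :: "pt set set \<Rightarrow> real" where
  "nu U = Max {edist x y | x y X. X \<in> U \<and> x \<in> insert (0,0) X \<and> y \<in> insert (0,0) X}"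

definition kappa :: "pt set set \<Rightarrow> real" where
  "kappa U = 3 * nu U"

definition strongly_connected :: "pt set set \<Rightarrow> pt set \<Rightarrow> bool" where
  "strongly_connected U S \<longleftrightarrow>
     (\<forall>x\<in>S. \<forall>y\<in>S. (x, y) \<in> {(a, b). a \<in> S \<and> b \<in> S \<and> edist a b \<le> kappa U}\<^sup>*)"

end

theory Submission
  imports Defs
begin

definition R :: "pt set set \<Rightarrow> pt set \<Rightarrow> (pt \<times> pt) set" where
  "R U S = {(a, b). a \<in> S \<and> b \<in> S \<and> edist a b \<le> kappa U}"

lemma sc_R: "strongly_connected U S \<longleftrightarrow> (\<forall>x\<in>S. \<forall>y\<in>S. (x,y) \<in> (R U S)\<^sup>*)"
  unfolding strongly_connected_def R_def by simp

lemma edist_sym: "edist a b = edist b a"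
  unfolding edist_def by (simp add: power2_commute)

lemma edist_ge0: "edist a b \<ge> 0"
  unfolding edist_def by simp

lemma edist_padd: "edist (padd x u) (padd x v) = edist u v"
  unfolding edist_def padd_def by (simp add: algebra_simps)

lemma edist_padd0: "edist x (padd x v) = edist (0,0) v"
  unfolding edist_def padd_def by (simp add: algebra_simps power2_commute)

lemma R_mono: "S \<subseteq> T \<Longrightarrow> R U S \<subseteq> R U T"
  unfolding R_def by auto

lemma R_sym: "sym (R U S)"
  unfolding R_def sym_def using edist_sym by auto

lemma Rs_sym: "(x,y) \<in> (R U S)\<^sup>* \<Longrightarrow> (y,x) \<in> (R U S)\<^sup>*"
  using sym_rtrancl[OF R_sym] unfolding sym_def by blast

lemma nu_ge:
  assumes uf: "update_family U" and X: "X \<in> U"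
    and u: "u \<in> insert (0,0) X" and v: "v \<in> insert (0,0) X"
  shows "edist u v \<le> nu U" and "0 \<le> nu U" and "edist u v \<le> kappa U"
proof -
  have eq: "{edist x y | x y X. X \<in> U \<and> x \<in> insert (0,0) X \<and> y \<in> insert (0,0) X}
      \<subseteq> (\<lambda>p. edist (fst p) (snd p)) ` (\<Union>X\<in>U. insert (0,0) X \<times> insert (0,0) X)" (is "?L \<subseteq> ?R")
  proof
    fix z assume "z \<in> ?L"
    then obtain X x y where h: "X \<in> U" "x \<in> insert (0,0) X" "y \<in> insert (0,0) X" "z = edist x y"
      by blast
    then have "(x,y) \<in> (\<Union>X\<in>U. insert (0,0) X \<times> insert (0,0) X)" by blast
    then show "z \<in> ?R" using h(4) by (intro rev_image_eqI) auto
  qed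
  have fin: "finite (\<Union>X\<in>U. insert (0,0) X \<times> insert (0,0) X)"
    using uf unfolding update_family_def by auto
  have mem: "edist u v \<in> {edist x y | x y X. X \<in> U \<and> x \<in> insert (0,0) X \<and> y \<in> insert (0,0) X}"
    using X u v by blast
  show 1: "edist u v \<le> nu U" unfolding nu_def
    by (rule Max_ge[OF finite_subset[OF eq finite_imageI[OF fin]] mem])
  show 2: "0 \<le> nu U" using 1 edist_ge0[of u v] by linarith
  show "edist u v \<le> kappa U" using 1 2 unfolding kappa_def by linarith
qed

lemma sc_extend:
  assumes "S \<subseteq> T" "strongly_connected U S"
    and "\<And>t. t \<in> T \<Longrightarrow> \<exists>s\<in>S. (t,s) \<in> (R U T)\<^sup>*"
  shows "strongly_connected U T"
  unfolding sc_R
proof (intro ballI)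
  fix x y assume x: "x \<in> T" and y: "y \<in> T"
  obtain s1 where s1: "s1 \<in> S" "(x,s1) \<in> (R U T)\<^sup>*" using assms(3) x by blast
  obtain s2 where s2: "s2 \<in> S" "(y,s2) \<in> (R U T)\<^sup>*" using assms(3) y by blast
  have "(s1,s2) \<in> (R U S)\<^sup>*" using assms(2) s1 s2 unfolding sc_R by blast
  hence "(s1,s2) \<in> (R U T)\<^sup>*" using rtrancl_mono[OF R_mono[OF assms(1)]] by blast
  moreover have "(s2,y) \<in> (R U T)\<^sup>*" using Rs_sym s2 by blast
  ultimately show "(x,y) \<in> (R U T)\<^sup>*" using s1 by (meson rtrancl_trans)
qed

definition linked :: "pt set set \<Rightarrow> pt set \<Rightarrow> pt set \<Rightarrow> bool" where
  "linked U S T \<longleftrightarrow> S \<inter> T \<noteq> {} \<or> (\<exists>a\<in>S. \<exists>b\<in>T. edist a b \<le> kappa U)"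

lemma sc_union:
  assumes "strongly_connected U S" "strongly_connected U T" "linked U S T"
  shows "strongly_connected U (S \<union> T)"
proof (rule sc_extend[OF _ assms(1)])
  show "S \<subseteq> S \<union> T" by blast
  fix t assume t: "t \<in> S \<union> T"
  show "\<exists>s\<in>S. (t, s) \<in> (R U (S \<union> T))\<^sup>*"
  proof (cases "t \<in> S")
    case True then show ?thesis by blast
  next
    case False
    hence tT: "t \<in> T" using t by blast
    have mT: "(R U T)\<^sup>* \<subseteq> (R U (S \<union> T))\<^sup>*" by (rule rtrancl_mono, rule R_mono) blast
    show ?thesis
    proof (cases "S \<inter> T \<noteq> {}")
      case True
      then obtain p where p: "p \<in> S" "p \<in> T" by blast
      have "(t,p) \<in> (R U T)\<^sup>*" using assms(2) tT p unfolding sc_R by blast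
      then show ?thesis using p mT by blast
    next
      case False
      then obtain a b where ab: "a \<in> S" "b \<in> T" "edist a b \<le> kappa U"
        using assms(3) unfolding linked_def by blast
      have "(t,b) \<in> (R U T)\<^sup>*" using assms(2) tT ab unfolding sc_R by blast
      hence 1: "(t,b) \<in> (R U (S \<union> T))\<^sup>*" using mT by blast
      have "(b,a) \<in> R U (S \<union> T)" using ab edist_sym[of a b] unfolding R_def by auto
      then show ?thesis using 1 ab by (meson rtrancl.rtrancl_into_rtrancl)
    qed
  qed
qed

lemma bp_step_mono: "A \<subseteq> B \<Longrightarrow> bp_step U A \<subseteq> bp_step U B"
proof
  fix x assume AB: "A \<subseteq> B" and "x \<in> bp_step U A"
  then consider "x \<in> A" | X where "X \<in> U" "padd x ` X \<subseteq> A" unfolding bp_step_def by auto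
  then show "x \<in> bp_step U B"
  proof cases
    case 1 then show ?thesis using AB unfolding bp_step_def by auto
  next
    case 2
    then have "padd x ` X \<subseteq> B" using AB by (meson order_trans)
    then show ?thesis using 2(1) unfolding bp_step_def by auto
  qed
qed

lemma bp_iter_mono: "A \<subseteq> B \<Longrightarrow> (bp_step U ^^ n) A \<subseteq> (bp_step U ^^ n) B"
proof (induction n)
  case 0 then show ?case by simp
next
  case (Suc n)
  have "bp_step U ((bp_step U ^^ n) A) \<subseteq> bp_step U ((bp_step U ^^ n) B)" by (rule bp_step_mono[OF Suc.IH[OF Suc.prems]])
  then show ?case by simp
qed

lemma step_incl: "A \<subseteq> bp_step U A"
  unfolding bp_step_def by (rule Un_upper1)

lemma iter_incl: "(bp_step U ^^ j) A \<subseteq> (bp_step U ^^ Suc j) A"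
  using step_incl[of "(bp_step U ^^ j) A" U] by simp

lemma bp_iter_chain: "i \<le> j \<Longrightarrow> (bp_step U ^^ i) A \<subseteq> (bp_step U ^^ j) A"
proof (induction j)
  case 0 then show ?case by simp
next
  case (Suc j)
  have "(bp_step U ^^ j) A \<subseteq> (bp_step U ^^ Suc j) A" by (rule iter_incl)
  then show ?case using Suc by (metis le_Suc_eq order_refl order_trans)
qed

lemma cl_mono: "A \<subseteq> B \<Longrightarrow> bp_closure U A \<subseteq> bp_closure U B"
  unfolding bp_closure_def by (rule UN_mono) (simp_all add: bp_iter_mono)

lemma cl_incl: "A \<subseteq> bp_closure U A"
proof -
  have "(bp_step U ^^ 0) A \<subseteq> (\<Union>t. (bp_step U ^^ t) A)" by (rule UN_upper) simp
  then show ?thesis unfolding bp_closure_def by simp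
qed

lemma cl_least:
  assumes "bp_step U S \<subseteq> S" "A \<subseteq> S"
  shows "bp_closure U A \<subseteq> S"
proof -
  have "(bp_step U ^^ n) A \<subseteq> S" for n
  proof (induction n)
    case 0 then show ?case using assms by simp
  next
    case (Suc n)
    have "bp_step U ((bp_step U ^^ n) A) \<subseteq> bp_step U S" by (rule bp_step_mono[OF Suc])
    then show ?case using assms(1) by simp
  qed
  then show ?thesis unfolding bp_closure_def by (simp add: UN_least)
qed

lemma finite_in_chain:
  assumes "finite F"
  shows "F \<subseteq> (\<Union>t. C t) \<Longrightarrow> (\<And>i j. i \<le> j \<Longrightarrow> C i \<subseteq> C j) \<Longrightarrow> \<exists>m. F \<subseteq> C (m::nat)"
  using assms
proof (induction F rule: finite_induct)
  case empty then show ?case by simp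
next
  case (insert y F)
  then obtain m where m: "F \<subseteq> C m" by blast
  obtain t where t: "y \<in> C t" using insert by blast
  have "C m \<subseteq> C (max m t)" "C t \<subseteq> C (max m t)" using insert by auto
  then show ?case using m t by blast
qed

lemma cl_closed:
  assumes "update_family U"
  shows "bp_step U (bp_closure U A) \<subseteq> bp_closure U A"
proof
  fix x assume "x \<in> bp_step U (bp_closure U A)"
  then consider "x \<in> bp_closure U A" | X where "X \<in> U" "padd x ` X \<subseteq> bp_closure U A"
    unfolding bp_step_def by blast
  then show "x \<in> bp_closure U A"
  proof cases
    case 1 then show ?thesis .
  next
    case 2
    have "finite X" using assms 2 unfolding update_family_def by blast
    then obtain m where m: "padd x ` X \<subseteq> (bp_step U ^^ m) A"
      using finite_in_chain[of "padd x ` X" "\<lambda>t. (bp_step U ^^ t) A"] 2 bp_iter_chain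
      unfolding bp_closure_def by blast
    then have "x \<in> (bp_step U ^^ Suc m) A" using 2 unfolding bp_step_def by auto
    then show ?thesis unfolding bp_closure_def by blast
  qed
qed

lemma cl_union: "update_family U \<Longrightarrow>
   bp_closure U (A \<union> B) = bp_closure U (bp_closure U A \<union> bp_closure U B)"
proof
  assume uf: "update_family U"
  show "bp_closure U (A \<union> B) \<subseteq> bp_closure U (bp_closure U A \<union> bp_closure U B)"
    by (rule cl_mono) (use cl_incl in blast)
  have "bp_closure U A \<union> bp_closure U B \<subseteq> bp_closure U (A \<union> B)"
    using cl_mono[of A "A \<union> B" U] cl_mono[of B "A \<union> B" U] by blast
  then show "bp_closure U (bp_closure U A \<union> bp_closure U B) \<subseteq> bp_closure U (A \<union> B)"
    using cl_least[OF cl_closed[OF uf]] by blast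
qed

lemma cl_sc:
  assumes uf: "update_family U" and ne: "{} \<notin> U" and sc: "strongly_connected U S"
  shows "strongly_connected U (bp_closure U S)"
proof -
  have scn: "strongly_connected U ((bp_step U ^^ n) S)" for n
  proof (induction n)
    case 0 then show ?case using sc by simp
  next
    case (Suc n)
    let ?A = "(bp_step U ^^ n) S"
    show ?case
    proof (rule sc_extend[OF _ Suc])
      show "?A \<subseteq> (bp_step U ^^ Suc n) S" by (rule iter_incl)
      fix t assume t: "t \<in> (bp_step U ^^ Suc n) S"
      show "\<exists>s\<in>?A. (t, s) \<in> (R U ((bp_step U ^^ Suc n) S))\<^sup>*"
      proof (cases "t \<in> ?A")
        case True then show ?thesis by blast
      next
        case False
        then obtain X where X: "X \<in> U" "padd t ` X \<subseteq> ?A"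
          using t unfolding bp_step_def by auto
        then obtain v where v: "v \<in> X" using ne by (metis ex_in_conv)
        have d: "edist t (padd t v) \<le> kappa U"
          using nu_ge(3)[OF uf X(1), of "(0,0)" v] v edist_padd0 by simp
        have s: "padd t v \<in> ?A" using X v by blast
        have "padd t v \<in> (bp_step U ^^ Suc n) S" using s iter_incl by blast
        then have "(t, padd t v) \<in> R U ((bp_step U ^^ Suc n) S)"
          using t d unfolding R_def by auto
        then show ?thesis using s by blast
      qed
    qed
  qed
  show ?thesis unfolding sc_R
  proof (intro ballI)
    fix x y assume "x \<in> bp_closure U S" "y \<in> bp_closure U S"
    then obtain i j where ij: "x \<in> (bp_step U ^^ i) S" "y \<in> (bp_step U ^^ j) S"
      unfolding bp_closure_def by blast
    let ?m = "max i j"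
    have "x \<in> (bp_step U ^^ ?m) S" "y \<in> (bp_step U ^^ ?m) S"
      using ij bp_iter_chain[of i ?m U S] bp_iter_chain[of j ?m U S] by auto
    then have "(x,y) \<in> (R U ((bp_step U ^^ ?m) S))\<^sup>*" using scn unfolding sc_R by blast
    moreover have "(bp_step U ^^ ?m) S \<subseteq> bp_closure U S" unfolding bp_closure_def by blast
    ultimately show "(x,y) \<in> (R U (bp_closure U S))\<^sup>*"
      using rtrancl_mono[OF R_mono] by blast
  qed
qed

lemma no_empty_rule:
  assumes "unbalanced_critical U" shows "{} \<notin> U"
proof
  assume e: "{} \<in> U"
  have "bp_step U A = UNIV" for A unfolding bp_step_def using e by force
  hence "bp_closure U A = UNIV" for A unfolding bp_closure_def
    by (metis (no_types, lifting) UNIV_I UN_I funpow.simps(2) o_apply subsetI subset_antisym UNIV_I)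
  moreover have "(0,0) \<notin> halfplane th" for th unfolding halfplane_def ip_def by simp
  ultimately have "\<not> stable_dir U th" for th unfolding stable_dir_def by auto
  hence "difficulty U th = 0" for th unfolding difficulty_def by simp
  moreover have z: "(SUP x\<in>S. (0::enat)) = 0" for S :: "real set"
    by (metis SUP_bot bot_enat_def)
  ultimately have "alpha U = 0" unfolding alpha_def by simp
  then show False using assms unfolding unbalanced_critical_def by simp
qed

lemma partition_step:
  assumes uc: "unbalanced_critical U"
    and sK: "strongly_connected U (bp_closure U K)"
  shows "finite P \<Longrightarrow> card P = n \<Longrightarrow> 2 \<le> n \<Longrightarrow> (\<forall>B\<in>P. B \<noteq> {}) \<Longrightarrow>
    (\<forall>B\<in>P. \<forall>C\<in>P. B \<noteq> C \<longrightarrow> B \<inter> C = {}) \<Longrightarrow> \<Union>P = K \<Longrightarrow>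
    (\<forall>B\<in>P. strongly_connected U (bp_closure U B)) \<Longrightarrow>
    \<exists>K1 K2. K1 \<union> K2 = K \<and> K1 \<inter> K2 = {} \<and> K1 \<noteq> {} \<and> K2 \<noteq> {} \<and>
           strongly_connected U (bp_closure U K1) \<and>
           strongly_connected U (bp_closure U K2) \<and>
           strongly_connected U (bp_closure U K1 \<union> bp_closure U K2)"
proof (induction n arbitrary: P rule: less_induct)
  case (less n P)
  have uf: "update_family U" using uc unfolding unbalanced_critical_def by blast
  have ne: "{} \<notin> U" using no_empty_rule[OF uc] .
  note fin = less.prems(1) and cardP = less.prems(2) and n2 = less.prems(3)
    and nonemp = less.prems(4) and disj = less.prems(5) and unK = less.prems(6)
    and scP = less.prems(7)
  have ex2: "\<exists>B\<in>P. \<exists>C\<in>P. B \<noteq> C"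
  proof (rule ccontr)
    assume "\<not> ?thesis"
    then have "card P \<le> Suc 0" using card_le_Suc0_iff_eq[OF fin] by blast
    then show False using cardP n2 by simp
  qed
  have link: "\<exists>B\<in>P. \<exists>C\<in>P. B \<noteq> C \<and> linked U (bp_closure U B) (bp_closure U C)"
  proof (rule ccontr)
    assume nl: "\<not> ?thesis"
    let ?S = "\<Union>B\<in>P. bp_closure U B"
    have closed: "bp_step U ?S \<subseteq> ?S"
    proof
      fix x assume "x \<in> bp_step U ?S"
      then consider "x \<in> ?S" | X where "X \<in> U" "padd x ` X \<subseteq> ?S"
        unfolding bp_step_def by auto
      then show "x \<in> ?S"
      proof cases
        case 1 then show ?thesis .
      next
        case 2
        then obtain v0 where v0: "v0 \<in> X" using ne by (metis ex_in_conv)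
        then obtain B where B: "B \<in> P" "padd x v0 \<in> bp_closure U B" using 2 by blast
        have "padd x ` X \<subseteq> bp_closure U B"
        proof
          fix y assume "y \<in> padd x ` X"
          then obtain v where v: "v \<in> X" "y = padd x v" by blast
          then obtain D where D: "D \<in> P" "y \<in> bp_closure U D" using 2 by blast
          have "edist (padd x v0) y \<le> kappa U"
            using nu_ge(3)[OF uf 2(1), of v0 v] v v0 edist_padd by simp
          then have "linked U (bp_closure U B) (bp_closure U D)"
            using B D unfolding linked_def by blast
          then have "D = B" using nl B D by blast
          then show "y \<in> bp_closure U B" using D by simp
        qed
        then have "x \<in> bp_step U (bp_closure U B)" using 2(1) unfolding bp_step_def by auto
        then show ?thesis using cl_closed[OF uf] B by blast
      qed
    qed
    have KS: "bp_closure U K \<subseteq> ?S"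
      by (rule cl_least[OF closed]) (use unK cl_incl in blast)
    obtain B C where BC: "B \<in> P" "C \<in> P" "B \<noteq> C" using ex2 by blast
    obtain b where b: "b \<in> B" using nonemp BC by blast
    obtain c where c: "c \<in> C" using nonemp BC by blast
    have bK: "b \<in> bp_closure U K" "c \<in> bp_closure U K"
      using b c BC unK cl_incl by blast+
    then have path: "(b,c) \<in> (R U (bp_closure U K))\<^sup>*" using sK unfolding sc_R by blast
    have "y \<in> bp_closure U B" if "(b,y) \<in> (R U (bp_closure U K))\<^sup>*" for y
      using that
    proof (induction rule: rtrancl_induct)
      case base then show ?case using b cl_incl by blast
    next
      case (step y z)
      then have "z \<in> ?S" "edist y z \<le> kappa U" using KS unfolding R_def by auto
      then obtain D where D: "D \<in> P" "z \<in> bp_closure U D" by blast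
      then have "linked U (bp_closure U B) (bp_closure U D)"
        using step \<open>edist y z \<le> kappa U\<close> unfolding linked_def by blast
      then have "D = B" using nl BC D by blast
      then show ?case using D by simp
    qed
    then have "c \<in> bp_closure U B" using path by blast
    moreover have "c \<in> bp_closure U C" using c cl_incl by blast
    ultimately have "linked U (bp_closure U B) (bp_closure U C)" unfolding linked_def by blast
    then show False using nl BC by blast
  qed
  then obtain B C where BC: "B \<in> P" "C \<in> P" "B \<noteq> C"
    and lk: "linked U (bp_closure U B) (bp_closure U C)" by blast
  have scBC: "strongly_connected U (bp_closure U B \<union> bp_closure U C)"
    using sc_union scP BC lk by blast
  have dBC: "B \<inter> C = {}" using disj BC by blast
  show ?case
  proof (cases "n = 2")
    case True
    have "P = {B, C}"
    proof (rule ccontr)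
      assume "P \<noteq> {B, C}"
      then have "{B, C} \<subset> P" using BC by blast
      then have "card {B,C} < card P" using fin psubset_card_mono by blast
      then show False using BC cardP True by simp
    qed
    then have "B \<union> C = K" using unK by simp
    moreover have "B \<noteq> {}" "C \<noteq> {}" using nonemp BC by auto
    moreover have "strongly_connected U (bp_closure U B)" "strongly_connected U (bp_closure U C)"
      using scP BC by auto
    ultimately show ?thesis using dBC scBC by (intro exI[of _ B] exI[of _ C]) simp
  next
    case False
    let ?P' = "insert (B \<union> C) (P - {B, C})"
    have notin: "B \<union> C \<notin> P - {B, C}"
    proof
      assume "B \<union> C \<in> P - {B, C}"
      then have h: "B \<union> C \<in> P" "B \<union> C \<noteq> B" by auto
      have "(B \<union> C) \<inter> B = {}" using disj[rule_format, OF h(1) BC(1) h(2)] .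
      then show False using nonemp BC(1) by auto
    qed
    have cP': "card ?P' = n - 1"
      using notin fin BC cardP n2 by (simp add: card_insert_if card_Diff_subset)
    have "strongly_connected U (bp_closure U (B \<union> C))"
      using cl_union[OF uf, of B C] cl_sc[OF uf ne scBC] by simp
    then have sc': "\<forall>D\<in>?P'. strongly_connected U (bp_closure U D)" using scP by simp
    have ne': "\<forall>D\<in>?P'. D \<noteq> {}" using nonemp BC by auto
    have un': "\<Union>?P' = K"
    proof -
      have "\<Union>?P' = (B \<union> C) \<union> \<Union>(P - {B, C})" by simp
      also have "\<dots> = \<Union>P" using BC(1,2) by auto
      finally show ?thesis using unK by simp
    qed
    have dj': "\<forall>D\<in>?P'. \<forall>E\<in>?P'. D \<noteq> E \<longrightarrow> D \<inter> E = {}"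
    proof (intro ballI impI)
      fix D E assume D: "D \<in> ?P'" and E: "E \<in> ?P'" and DE: "D \<noteq> E"
      have key: "F \<inter> (B \<union> C) = {}" if "F \<in> P - {B, C}" for F
      proof -
        have "F \<inter> B = {}" using disj that BC(1) by auto
        moreover have "F \<inter> C = {}" using disj that BC(2) by auto
        ultimately show ?thesis by auto
      qed
      show "D \<inter> E = {}"
      proof (cases "D = B \<union> C")
        case True
        then have "E \<in> P - {B, C}" using E DE by auto
        then show ?thesis using key True by auto
      next
        case False
        then have D': "D \<in> P - {B, C}" using D by auto
        show ?thesis
        proof (cases "E = B \<union> C")
          case True then show ?thesis using key[OF D'] by auto
        next
          case False
          then have "E \<in> P" using E by auto
          then show ?thesis using disj D' DE by auto
        qed
      qed
    qed
    have lt: "n - 1 < n" using n2 by simp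
    have n2': "2 \<le> n - 1" using n2 False by simp
    have finP': "finite ?P'" using fin by simp
    show ?thesis by (rule less.IH[OF lt finP' cP' n2' ne' dj' un' sc'])
  qed
qed

theorem mainTheorem12:
  fixes U :: "pt set set" and K :: "pt set"
  assumes "unbalanced_critical U"
    and "finite K" and "2 \<le> card K"
    and "strongly_connected U (bp_closure U K)"
  shows "\<exists>K1 K2. K1 \<union> K2 = K \<and> K1 \<inter> K2 = {} \<and> K1 \<noteq> {} \<and> K2 \<noteq> {} \<and>
           strongly_connected U (bp_closure U K1) \<and>
           strongly_connected U (bp_closure U K2) \<and>
           strongly_connected U (bp_closure U K1 \<union> bp_closure U K2)"
proof -
  have uf: "update_family U" using assms(1) unfolding unbalanced_critical_def by blast
  have ne: "{} \<notin> U" using no_empty_rule[OF assms(1)] .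
  let ?P = "(\<lambda>x. {x}) ` K"
  have c: "card ?P = card K" using card_image[of "\<lambda>x. {x}" K] by (simp add: inj_on_def)
  have s1: "strongly_connected U {x}" for x unfolding sc_R by simp
  show ?thesis
    by (rule partition_step[OF assms(1) assms(4), of ?P "card K"])
      (use assms(2,3) c cl_sc[OF uf ne s1] in auto)
qed

end
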